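(* Let $\mathcal{L}$ be a language on the alphabet $\{a,b\}$ and let ${\rm S}:\mathcal{L}\to\mathbb{N}_0\times\mathbb{N}_0$ be a homomorphism. If $\{{\rm S}(a),{\rm S}(b)\}\neq\{(0,1),(1,0)\}$, then $(\mathbb{N}_0\times\mathbb{N}_0)\setminus{\rm S}(\mathcal{L})$ is infinite.
   Context: $\mathbb{N}_0=\{0,1,2,\dots\}$. A language on $\{a,b\}$ is a set of nonempty finite words over $\{a,b\}$ closed under concatenation (a sub-semigroup of the free semigroup on $\{a,b\}$). A homomorphism ${\rm S}:\mathcal{L}\to\mathbb{N}_0\times\mathbb{N}_0$ is a map with ${\rm S}(w_1\cdots w_n)={\rm S}(w_1)+\cdots+{\rm S}(w_n)$ (coordinatewise addition), determined by the vectors ${\rm S}(a),{\rm S}(b)$. *)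

theory Defs
  imports Main "HOL-Library.Product_Plus"
begin

datatype letter = a | b

definition is_language :: "letter list set \<Rightarrow> bool" where
  "is_language L \<longleftrightarrow> (\<forall>w\<in>L. w \<noteq> []) \<and> (\<forall>u\<in>L. \<forall>v\<in>L. u @ v \<in> L)"

definition hom :: "nat \<times> nat \<Rightarrow> nat \<times> nat \<Rightarrow> letter list \<Rightarrow> nat \<times> nat" where
  "hom Sa Sb w = sum_list (map (\<lambda>c. case c of a \<Rightarrow> Sa | b \<Rightarrow> Sb) w)"

lemma hom_append: "hom Sa Sb (u @ v) = hom Sa Sb u + hom Sa Sb v"
  by (simp add: hom_def)

lemma hom_letters: "hom Sa Sb [a] = Sa" "hom Sa Sb [b] = Sb"
  by (simp_all add: hom_def)

end

theory Submission
  imports Defs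
begin

lemma hom_eq: "hom Sa Sb w = (count_list w a * fst Sa + count_list w b * fst Sb,
    count_list w a * snd Sa + count_list w b * snd Sb)"
proof (induction w)
  case Nil then show ?case by (simp add: hom_def zero_prod_def)
next
  case (Cons c w)
  have "hom Sa Sb (c # w) = hom Sa Sb [c] + hom Sa Sb w"
    using hom_append[of Sa Sb "[c]" w] by simp
  then show ?case using Cons by (cases c) (auto simp: hom_letters plus_prod_def)
qed

lemma inf_range: "inj (f::nat \<Rightarrow> nat \<times> nat) \<Longrightarrow> infinite (range f)"
  using finite_imageD by blast

lemma axis_x:
  assumes "\<not> ((a1 > 0 \<and> a2 = 0) \<or> (b1 > 0 \<and> b2 = (0::nat)))"
  shows "\<exists>M. infinite M \<and> (\<forall>i j. (i*a1+j*b1, i*a2+j*b2) \<notin> M)"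
proof (intro exI conjI allI)
  show "infinite (range (\<lambda>n. (Suc n, 0::nat)))" by (rule inf_range) (auto simp: inj_def)
  fix i j :: nat
  show "(i*a1+j*b1, i*a2+j*b2) \<notin> range (\<lambda>n. (Suc n, 0::nat))"
    using assms by auto
qed

lemma axis_y:
  assumes "\<not> ((a2 > 0 \<and> a1 = 0) \<or> (b2 > 0 \<and> b1 = (0::nat)))"
  shows "\<exists>M. infinite M \<and> (\<forall>i j. (i*a1+j*b1, i*a2+j*b2) \<notin> M)"
proof (intro exI conjI allI)
  show "infinite (range (\<lambda>n. (0::nat, Suc n)))" by (rule inf_range) (auto simp: inj_def)
  fix i j :: nat
  show "(i*a1+j*b1, i*a2+j*b2) \<notin> range (\<lambda>n. (0::nat, Suc n))"
    using assms by auto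
qed

lemma nodiv: "(c::nat) \<ge> 2 \<Longrightarrow> x*c \<noteq> c*n+1"
proof
  assume "c \<ge> 2" "x*c = c*n+1"
  then have "(x*c) mod c = (c*n+1) mod c" by simp
  then show False using \<open>c \<ge> 2\<close> by (simp add: mod_Suc)
qed

lemma injx: "c \<ge> 2 \<Longrightarrow> infinite (range (\<lambda>n::nat. (c*n+1, 0::nat)))"
  by (rule inf_range) (auto simp: inj_def)
lemma injy: "c \<ge> 2 \<Longrightarrow> infinite (range (\<lambda>n::nat. (0::nat, c*n+1)))"
  by (rule inf_range) (auto simp: inj_def)

lemma key:
  assumes "\<not> ((a1,a2)=(0,1) \<and> (b1,b2)=(1,0) \<or> (a1,a2)=(1,0) \<and> (b1,b2)=((0::nat),(1::nat)))"
  shows "\<exists>M. infinite M \<and> (\<forall>i j. (i*a1+j*b1, i*a2+j*b2) \<notin> M)"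
proof (cases "(a1 > 0 \<and> a2 = 0) \<or> (b1 > 0 \<and> b2 = 0)")
  case False then show ?thesis by (rule axis_x)
next
  case X: True
  show ?thesis
  proof (cases "(a2 > 0 \<and> a1 = 0) \<or> (b2 > 0 \<and> b1 = 0)")
    case False then show ?thesis by (rule axis_y)
  next
    case Y: True
    consider "a1 > 0" "a2 = 0" "b2 > 0" "b1 = 0" | "b1 > 0" "b2 = 0" "a2 > 0" "a1 = 0"
      using X Y by auto
    then show ?thesis
    proof cases
      case 1
      then have "a1 \<ge> 2 \<or> b2 \<ge> 2" using assms by auto
      then show ?thesis
      proof
        assume h: "a1 \<ge> 2"
        show ?thesis
          apply (rule exI[of _ "range (\<lambda>n::nat. (a1*n+1, 0::nat))"])
          using injx[OF h] nodiv[OF h] 1 by auto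
      next
        assume h: "b2 \<ge> 2"
        show ?thesis
          apply (rule exI[of _ "range (\<lambda>n::nat. (0::nat, b2*n+1))"])
          using injy[OF h] nodiv[OF h] 1 by auto
      qed
    next
      case 2
      then have "b1 \<ge> 2 \<or> a2 \<ge> 2" using assms by auto
      then show ?thesis
      proof
        assume h: "b1 \<ge> 2"
        show ?thesis
          apply (rule exI[of _ "range (\<lambda>n::nat. (b1*n+1, 0::nat))"])
          using injx[OF h] nodiv[OF h] 2 by auto
      next
        assume h: "a2 \<ge> 2"
        show ?thesis
          apply (rule exI[of _ "range (\<lambda>n::nat. (0::nat, a2*n+1))"])
          using injy[OF h] nodiv[OF h] 2 by auto
      qed
    qed
  qed
qed

theorem proposition9:
  fixes L :: "letter list set" and Sa Sb :: "nat \<times> nat"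
  assumes "is_language L"
    and "{Sa, Sb} \<noteq> {(0, 1), (1, 0)}"
  shows "infinite (UNIV - hom Sa Sb ` L)"
proof -
  obtain a1 a2 b1 b2 where S: "Sa = (a1,a2)" "Sb = (b1,b2)" by fastforce
  have "\<not> ((a1,a2)=(0,1) \<and> (b1,b2)=(1,0) \<or> (a1,a2)=(1,0) \<and> (b1,b2)=((0::nat),(1::nat)))"
    using assms(2) S by auto
  from key[OF this] obtain M where M: "infinite M" "\<forall>i j. (i*a1+j*b1, i*a2+j*b2) \<notin> M" by blast
  have "M \<subseteq> UNIV - hom Sa Sb ` L"
  proof
    fix x assume "x \<in> M"
    have "x \<notin> hom Sa Sb ` L"
    proof
      assume "x \<in> hom Sa Sb ` L"
      then obtain w where "x = hom Sa Sb w" by blast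
      then have "x = (count_list w a * a1 + count_list w b * b1, count_list w a * a2 + count_list w b * b2)"
        using hom_eq[of Sa Sb w] S by simp
      then show False using M(2) \<open>x \<in> M\<close> by blast
    qed
    then show "x \<in> UNIV - hom Sa Sb ` L" by simp
  qed
  then show ?thesis using M(1) infinite_super by blast
qed

end
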